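(* Let $k$ be an algebraically closed field of characteristic $0$. Every curve in a nonempty Zariski open subset of the moduli space of genus-$2$ curves over $k$ is isomorphic to a curve of the form $y^2=(x-v)(vx-1)(x^2-a_1)(x^2-a_2)$ with $a_1,a_2,v\in k$. Equivalently, for six points $P_1,\ldots,P_6$ of $\mathbf{P}^1(k)$ in general position, there is a coordinate $x$ on $\mathbf{P}^1$ in which the set $\{P_1,\ldots,P_6\}$ equals $\{x_1,-x_1,x_2,-x_2,v,1/v\}$ for some $x_1,x_2,v\in k$. *)

theory Defs
  imports "HOL-Computational_Algebra.Polynomial"
begin

text \<open>Polynomials in the six variables t_0,...,t_5 over k, represented by their
 coefficient function on exponent vectors (e :: nat => nat, with e i = 0 for i >= 6),
 with finite support.\<close>

definition is_poly6 :: "((nat \<Rightarrow> nat) \<Rightarrow> 'k::field) \<Rightarrow> bool" where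
  "is_poly6 c \<longleftrightarrow> finite {e. c e \<noteq> 0} \<and> (\<forall>e. c e \<noteq> 0 \<longrightarrow> (\<forall>i\<ge>6. e i = 0))"

definition eval_poly6 :: "((nat \<Rightarrow> nat) \<Rightarrow> 'k::field) \<Rightarrow> (nat \<Rightarrow> 'k) \<Rightarrow> 'k" where
  "eval_poly6 c P = (\<Sum>e\<in>{e. c e \<noteq> 0}. c e * (\<Prod>i<6. P i ^ e i))"

definition moebius :: "'k::field \<Rightarrow> 'k \<Rightarrow> 'k \<Rightarrow> 'k \<Rightarrow> 'k \<Rightarrow> 'k" where
  "moebius a b c d x = (a * x + b) / (c * x + d)"

end

theory Submission
  imports Defs
begin

definition mon :: "(nat \<Rightarrow> nat) \<Rightarrow> (nat \<Rightarrow> 'k::field) \<Rightarrow> 'k" where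
  "mon e P = (\<Prod>i<6. P i ^ e i)"
definition supp :: "((nat \<Rightarrow> nat) \<Rightarrow> 'k::field) \<Rightarrow> (nat \<Rightarrow> nat) set" where
  "supp p = {e. p e \<noteq> 0}"
definition pc :: "'k::field \<Rightarrow> (nat \<Rightarrow> nat) \<Rightarrow> 'k" where
  "pc c = (\<lambda>e. if e = (\<lambda>_. 0) then c else 0)"
definition pv :: "nat \<Rightarrow> (nat \<Rightarrow> nat) \<Rightarrow> 'k::field" where
  "pv i = (\<lambda>e. if e = (\<lambda>j. if j = i then 1 else 0) then 1 else 0)"
definition padd :: "((nat \<Rightarrow> nat) \<Rightarrow> 'k::field) \<Rightarrow> _ \<Rightarrow> _" where
  "padd p q = (\<lambda>e. p e + q e)"
definition pneg :: "((nat \<Rightarrow> nat) \<Rightarrow> 'k::field) \<Rightarrow> _" where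
  "pneg p = (\<lambda>e. - p e)"
definition gsum :: "(nat \<Rightarrow> nat) \<times> (nat \<Rightarrow> nat) \<Rightarrow> nat \<Rightarrow> nat" where
  "gsum x = (\<lambda>i. fst x i + snd x i)"
definition pmul :: "((nat \<Rightarrow> nat) \<Rightarrow> 'k::field) \<Rightarrow> _ \<Rightarrow> _" where
  "pmul p q = (\<lambda>e. \<Sum>x\<in>{x \<in> supp p \<times> supp q. gsum x = e}. p (fst x) * q (snd x))"

lemma eval_sup:
  assumes "finite S" "supp p \<subseteq> S"
  shows "eval_poly6 p P = (\<Sum>e\<in>S. p e * mon e P)"
  unfolding eval_poly6_def mon_def
  by (rule sum.mono_neutral_left) (use assms in \<open>auto simp: supp_def\<close>)

lemma pc: "is_poly6 (pc c)" "eval_poly6 (pc c) P = c"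
proof -
  show "is_poly6 (pc c)" unfolding is_poly6_def pc_def by auto
  have "eval_poly6 (pc c) P = (\<Sum>e\<in>{\<lambda>_. 0}. pc c e * mon e P)"
    by (rule eval_sup) (auto simp: supp_def pc_def)
  thus "eval_poly6 (pc c) P = c" by (simp add: pc_def mon_def)
qed

lemma pv: assumes "i < 6" shows "is_poly6 (pv i)" "eval_poly6 (pv i) P = P i"
proof -
  show "is_poly6 (pv i)" unfolding is_poly6_def pv_def using assms by auto
  have "eval_poly6 (pv i) P = (\<Sum>e\<in>{\<lambda>j. if j = i then 1 else 0}. pv i e * mon e P)"
    by (rule eval_sup) (auto simp: supp_def pv_def)
  also have "\<dots> = (\<Prod>j<6. P j ^ (if j = i then 1 else 0))"
    by (simp add: pv_def mon_def)
  also have "\<dots> = (\<Prod>j<6. if j = i then P j else 1)"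
    by (intro prod.cong) auto
  also have "\<dots> = P i" using assms by (simp add: prod.delta)
  finally show "eval_poly6 (pv i) P = P i" .
qed

lemma padd: assumes "is_poly6 p" "is_poly6 q"
  shows "is_poly6 (padd p q)" "eval_poly6 (padd p q) P = eval_poly6 p P + eval_poly6 q P"
proof -
  have f: "finite (supp p \<union> supp q)" using assms by (auto simp: is_poly6_def supp_def)
  show "is_poly6 (padd p q)" using assms f unfolding is_poly6_def padd_def
    apply (auto simp: supp_def intro: finite_subset[OF _ f])
    by (metis add.left_neutral)
  have "eval_poly6 (padd p q) P = (\<Sum>e\<in>supp p \<union> supp q. padd p q e * mon e P)"
    by (rule eval_sup[OF f]) (auto simp: supp_def padd_def)
  also have "\<dots> = (\<Sum>e\<in>supp p \<union> supp q. p e * mon e P) + (\<Sum>e\<in>supp p \<union> supp q. q e * mon e P)"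
    by (simp add: padd_def distrib_right sum.distrib)
  also have "\<dots> = eval_poly6 p P + eval_poly6 q P"
    using eval_sup[OF f, of p] eval_sup[OF f, of q] by auto
  finally show "eval_poly6 (padd p q) P = eval_poly6 p P + eval_poly6 q P" .
qed

lemma pneg: assumes "is_poly6 p"
  shows "is_poly6 (pneg p)" "eval_poly6 (pneg p) P = - eval_poly6 p P"
proof -
  have f: "finite (supp p)" using assms by (auto simp: is_poly6_def supp_def)
  show "is_poly6 (pneg p)" using assms unfolding is_poly6_def pneg_def by auto
  have "eval_poly6 (pneg p) P = (\<Sum>e\<in>supp p. pneg p e * mon e P)"
    by (rule eval_sup[OF f]) (auto simp: supp_def pneg_def)
  also have "\<dots> = - (\<Sum>e\<in>supp p. p e * mon e P)"
    by (simp add: pneg_def sum_negf)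
  also have "\<dots> = - eval_poly6 p P" using eval_sup[OF f, of p] by auto
  finally show "eval_poly6 (pneg p) P = - eval_poly6 p P" .
qed

lemma mon_gsum: "mon (gsum x) P = mon (fst x) P * mon (snd x) P"
  by (simp add: mon_def gsum_def power_add prod.distrib)

lemma pmul: assumes "is_poly6 p" "is_poly6 q"
  shows "is_poly6 (pmul p q)" "eval_poly6 (pmul p q) P = eval_poly6 p P * eval_poly6 q P"
proof -
  have fA: "finite (supp p)" "finite (supp q)" using assms by (auto simp: is_poly6_def supp_def)
  define T where "T = gsum ` (supp p \<times> supp q)"
  have fT: "finite T" using fA by (simp add: T_def)
  have sT: "supp (pmul p q) \<subseteq> T"
  proof
    fix e assume "e \<in> supp (pmul p q)"
    hence "pmul p q e \<noteq> 0" by (simp add: supp_def)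
    hence "{x \<in> supp p \<times> supp q. gsum x = e} \<noteq> {}" by (metis (mono_tags, lifting) pmul_def sum.empty)
    thus "e \<in> T" by (auto simp: T_def)
  qed
  show "is_poly6 (pmul p q)"
    unfolding is_poly6_def
  proof (intro conjI allI impI)
    show "finite {e. pmul p q e \<noteq> 0}" using sT fT by (auto simp: supp_def intro: finite_subset)
  next
    fix e and i :: nat assume "pmul p q e \<noteq> 0" "6 \<le> i"
    hence "e \<in> T" using sT by (auto simp: supp_def)
    then obtain a b where "a \<in> supp p" "b \<in> supp q" "e = gsum (a,b)" by (auto simp: T_def)
    thus "e i = 0" using assms \<open>6 \<le> i\<close> by (auto simp: is_poly6_def supp_def gsum_def)
  qed
  have "eval_poly6 (pmul p q) P = (\<Sum>e\<in>T. pmul p q e * mon e P)"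
    by (rule eval_sup[OF fT sT])
  also have "\<dots> = (\<Sum>e\<in>T. \<Sum>x\<in>{x \<in> supp p \<times> supp q. gsum x = e}. p (fst x) * q (snd x) * mon (gsum x) P)"
    by (simp add: pmul_def sum_distrib_right)
  also have "\<dots> = (\<Sum>x\<in>supp p \<times> supp q. p (fst x) * q (snd x) * mon (gsum x) P)"
    by (rule sum.group) (use fA fT in \<open>auto simp: T_def\<close>)
  also have "\<dots> = (\<Sum>a\<in>supp p. \<Sum>b\<in>supp q. (p a * mon a P) * (q b * mon b P))"
    by (simp add: sum.cartesian_product mon_gsum mult_ac split_def)
  also have "\<dots> = (\<Sum>a\<in>supp p. p a * mon a P) * (\<Sum>b\<in>supp q. q b * mon b P)"
    by (simp add: sum_product)
  also have "\<dots> = eval_poly6 p P * eval_poly6 q P"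
    using eval_sup[OF fA(1) order.refl, of P] eval_sup[OF fA(2) order.refl, of P] by simp
  finally show "eval_poly6 (pmul p q) P = eval_poly6 p P * eval_poly6 q P" .
qed

definition psub where "psub p q = padd p (pneg q)"

lemma psub: assumes "is_poly6 p" "is_poly6 q"
  shows "is_poly6 (psub p q)" "eval_poly6 (psub p q) P = eval_poly6 p P - eval_poly6 q P"
  using assms by (simp_all add: psub_def padd pneg)

definition "Dv (P::nat \<Rightarrow> 'k::field) = P 0 + P 1 - (P 2 + P 3)"
definition "Sv (P::nat \<Rightarrow> 'k::field) = 2*(P 0*P 1 - P 2*P 3)"
definition "Pnv (P::nat \<Rightarrow> 'k::field) = Sv P*(P 0+P 1) - 2*(P 0*P 1*Dv P)"
definition "Dcv (P::nat \<Rightarrow> 'k::field) = Sv P*Sv P - 2*(Pnv P*Dv P)"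
definition "Qv (P::nat \<Rightarrow> 'k::field) i = 2*(Dv P*(P i*P i)) - 2*(Sv P*P i) + Pnv P"
definition "Fv (P::nat \<Rightarrow> 'k::field) = Dv P * (Dcv P * (Qv P 0 * (Qv P 1 * (Qv P 2 * (Qv P 3 * (Qv P 4 * Qv P 5))))))"

definition "pD = psub (padd (pv 0) (pv 1)) (padd (pv 2) (pv 3))"
definition "pS = pmul (pc 2) (psub (pmul (pv 0) (pv 1)) (pmul (pv 2) (pv 3)))"
definition "pPn = psub (pmul pS (padd (pv 0) (pv 1))) (pmul (pc 2) (pmul (pmul (pv 0) (pv 1)) pD))"
definition "pDc = psub (pmul pS pS) (pmul (pc 2) (pmul pPn pD))"
definition "pQ i = padd (psub (pmul (pc 2) (pmul pD (pmul (pv i) (pv i)))) (pmul (pc 2) (pmul pS (pv i)))) pPn"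
definition "pF = pmul pD (pmul pDc (pmul (pQ 0) (pmul (pQ 1) (pmul (pQ 2) (pmul (pQ 3) (pmul (pQ 4) (pQ 5)))))))"

lemma pD: "is_poly6 pD" "eval_poly6 pD P = Dv P"
  by (simp_all add: pD_def Dv_def padd psub pv)
lemma pS: "is_poly6 pS" "eval_poly6 pS P = Sv P"
  by (simp_all add: pS_def Sv_def pmul psub pv pc)
lemma pPn: "is_poly6 pPn" "eval_poly6 pPn P = Pnv P"
  by (simp_all add: pPn_def Pnv_def pmul psub pv pc pS pD padd)
lemma pDc: "is_poly6 pDc" "eval_poly6 pDc P = Dcv P"
  by (simp_all add: pDc_def Dcv_def pmul psub pv pc pS pD padd pPn)
lemma pQ: "i < 6 \<Longrightarrow> is_poly6 (pQ i)" "i < 6 \<Longrightarrow> eval_poly6 (pQ i) P = Qv P i"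
  by (simp_all add: pQ_def Qv_def pmul psub pv pc pS pD padd pPn)
lemma pF: "is_poly6 pF" "eval_poly6 pF P = Fv P"
  by (simp_all add: pF_def Fv_def pmul pQ pDc pD)

lemma pF_nz: "\<exists>e. (pF :: _ \<Rightarrow> 'k::field_char_0) e \<noteq> 0"
proof (rule ccontr)
  assume "\<not> (\<exists>e. (pF :: _ \<Rightarrow> 'k) e \<noteq> 0)"
  hence "eval_poly6 (pF :: _ \<Rightarrow> 'k) P = 0" for P by (simp add: eval_poly6_def)
  moreover have "Fv (\<lambda>i. if i = 0 then -3 else if i = 1 then -2 else if i = 2 then -1
     else if i = 3 then 0 else -3 :: 'k) \<noteq> 0"
    by (simp add: Fv_def Dv_def Dcv_def Qv_def Sv_def Pnv_def)
  ultimately show False by (simp add: pF)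
qed

lemma div_neg_eq: "(b::'k::field) \<noteq> 0 \<Longrightarrow> d \<noteq> 0 \<Longrightarrow> a*d + c*b = 0 \<Longrightarrow> a/b = -(c/d)"
proof -
  assume h: "b \<noteq> 0" "d \<noteq> 0" "a*d + c*b = 0"
  hence "a * d = (-c) * b" by (simp add: eq_neg_iff_add_eq_0)
  hence "a / b = (-c) / d" using h by (subst frac_eq_eq) simp_all
  thus ?thesis by simp
qed

lemma main_geo:
  fixes P :: "nat \<Rightarrow> 'k::{alg_closed_field, field_char_0}"
  assumes "Fv P \<noteq> 0"
  shows "\<exists>a b c d x1 x2 v. a * d - b * c \<noteq> 0 \<and> v \<noteq> 0 \<and>
                 (\<forall>i<6. c * P i + d \<noteq> 0) \<and>
                 moebius a b c d ` (P ` {..<6}) = {x1, -x1, x2, -x2, v, 1 / v}"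
proof -
  have all: "Dv P \<noteq> 0 \<and> Dcv P \<noteq> 0 \<and> Qv P 0 \<noteq> 0 \<and> Qv P 1 \<noteq> 0 \<and> Qv P 2 \<noteq> 0 \<and>
     Qv P 3 \<noteq> 0 \<and> Qv P 4 \<noteq> 0 \<and> Qv P 5 \<noteq> 0"
    using assms unfolding Fv_def by simp
  hence D: "Dv P \<noteq> 0" and Dc: "Dcv P \<noteq> 0" by blast+
  have Q: "Qv P i \<noteq> 0" if "i < 6" for i
  proof -
    have "i = 0 \<or> i = 1 \<or> i = 2 \<or> i = 3 \<or> i = 4 \<or> i = 5" using that by linarith
    thus ?thesis using all by blast
  qed
  define s where "s = Sv P / Dv P"
  define p where "p = Pnv P / (2 * Dv P)"
  have ds: "Dv P * s = Sv P" using D by (simp add: s_def)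
  have dp: "2 * Dv P * p = Pnv P" using D by (simp add: p_def)
  have "\<exists>y. y ^ 2 = s^2 - 4 * p" by (rule nth_root_exists) simp
  then obtain r where r: "r ^ 2 = s^2 - 4 * p" ..
  have dsc: "Dv P * Dv P * (s^2 - 4 * p) = Dcv P"
  proof -
    have "Dv P * Dv P * (s^2 - 4 * p) = (Dv P * s) * (Dv P * s) - 2 * Dv P * (2 * Dv P * p)"
      by (simp add: algebra_simps power2_eq_square)
    also have "\<dots> = Dcv P" unfolding ds dp Dcv_def by (simp add: algebra_simps)
    finally show ?thesis .
  qed
  have rnz: "r \<noteq> 0"
  proof
    assume "r = 0"
    hence "s^2 - 4*p = 0" using r by simp
    hence "Dcv P = 0" using dsc by simp
    thus False using Dc by simp
  qed
  define \<alpha> where "\<alpha> = (s + r) / 2"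
  define \<beta> where "\<beta> = (s - r) / 2"
  have ab: "\<alpha> - \<beta> = r" by (simp add: \<alpha>_def \<beta>_def diff_divide_distrib[symmetric])
  hence ab: "\<alpha> - \<beta> \<noteq> 0" using rnz by simp
  have sum: "\<alpha> + \<beta> = s" by (simp add: \<alpha>_def \<beta>_def add_divide_distrib[symmetric])
  have "\<alpha> * \<beta> = ((s + r) * (s - r)) / 4" by (simp add: \<alpha>_def \<beta>_def)
  also have "(s + r) * (s - r) = s^2 - r^2" by (simp add: algebra_simps power2_eq_square)
  also have "\<dots> = 4 * p" using r by simp
  finally have prod: "\<alpha> * \<beta> = p" by simp
  have Qab: "(P i - \<alpha>) * (P i - \<beta>) \<noteq> 0" if "i < 6" for i
  proof -
    have "(P i - \<alpha>) * (P i - \<beta>) = P i * P i - (\<alpha> + \<beta>) * P i + \<alpha> * \<beta>" by (simp add: algebra_simps)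
    hence e: "(P i - \<alpha>) * (P i - \<beta>) = P i * P i - s * P i + p" by (simp add: sum prod)
    have "2 * Dv P * (P i * P i - s * P i + p) = 2*(Dv P*(P i*P i)) - 2*((Dv P * s)*P i) + 2 * Dv P * p"
      by (simp add: algebra_simps)
    also have "\<dots> = Qv P i" unfolding ds dp Qv_def by simp
    finally have "2 * Dv P * ((P i - \<alpha>) * (P i - \<beta>)) = Qv P i" using e by simp
    thus ?thesis using Q[OF that] by auto
  qed
  have na: "P i - \<alpha> \<noteq> 0" and nb: "P i - \<beta> \<noteq> 0" if "i < 6" for i using Qab[OF that] by auto
  define m0 where "m0 x = (x - \<alpha>) / (x - \<beta>)" for x
  have pair: "m0 (P i) = - m0 (P j)" if "i < 6" "j < 6" "2 * P i * P j - s * (P i + P j) + 2 * p = 0" for i j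
    unfolding m0_def
  proof (rule div_neg_eq[OF nb[OF that(1)] nb[OF that(2)]])
    have "(P i - \<alpha>) * (P j - \<beta>) + (P j - \<alpha>) * (P i - \<beta>) = 2 * P i * P j - (\<alpha> + \<beta>) * (P i + P j) + 2 * (\<alpha> * \<beta>)"
      by (simp add: algebra_simps)
    thus "(P i - \<alpha>) * (P j - \<beta>) + (P j - \<alpha>) * (P i - \<beta>) = 0" using that(3) by (simp add: sum prod)
  qed
  have e01: "2 * P 0 * P 1 - s * (P 0 + P 1) + 2 * p = 0"
  proof -
    have "Dv P * (2 * P 0 * P 1 - s * (P 0 + P 1) + 2 * p) = 2 * P 0 * P 1 * Dv P - (Dv P * s) * (P 0 + P 1) + 2 * Dv P * p"
      by (simp add: algebra_simps)
    also have "\<dots> = 0" unfolding ds dp Pnv_def by (simp add: algebra_simps)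
    finally show ?thesis using D by simp
  qed
  have e23: "2 * P 2 * P 3 - s * (P 2 + P 3) + 2 * p = 0"
  proof -
    have "Dv P * (2 * P 2 * P 3 - s * (P 2 + P 3) + 2 * p) = 2 * P 2 * P 3 * Dv P - (Dv P * s) * (P 2 + P 3) + 2 * Dv P * p"
      by (simp add: algebra_simps)
    also have "\<dots> = 2 * P 2 * P 3 * Dv P - Sv P * (P 2 + P 3) + Pnv P" unfolding ds dp ..
    also have "\<dots> = 0" unfolding Pnv_def Sv_def Dv_def by (simp add: algebra_simps)
    finally show ?thesis using D by simp
  qed
  have m4: "m0 (P 4) \<noteq> 0" and m5: "m0 (P 5) \<noteq> 0"
    using na[of 4] nb[of 4] na[of 5] nb[of 5] by (simp_all add: m0_def)
  have "\<exists>y. y ^ 2 = 1 / (m0 (P 4) * m0 (P 5))" by (rule nth_root_exists) simp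
  then obtain lam where lam: "lam ^ 2 = 1 / (m0 (P 4) * m0 (P 5))" ..
  have lnz: "lam \<noteq> 0" using lam m4 m5 by auto
  have mo: "moebius lam (- lam * \<alpha>) 1 (- \<beta>) x = lam * m0 x" for x
    by (simp add: moebius_def m0_def algebra_simps)
  have six: "{..<6::nat} = {0,1,2,3,4,5}" by auto
  have e10: "2 * P 1 * P 0 - s * (P 1 + P 0) + 2 * p = 0" using e01 by (simp add: algebra_simps)
  have e32: "2 * P 3 * P 2 - s * (P 3 + P 2) + 2 * p = 0" using e23 by (simp add: algebra_simps)
  have m1: "m0 (P 1) = - m0 (P 0)" using pair[of 1 0] e10 by simp
  have m3: "m0 (P 3) = - m0 (P 2)" using pair[of 3 2] e32 by simp
  have m5: "lam * m0 (P 5) = 1 / (lam * m0 (P 4))"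
    using lam lnz m4 m5 by (simp add: field_simps power2_eq_square)
  have img: "moebius lam (- lam * \<alpha>) 1 (- \<beta>) ` P ` {..<6} =
     {lam * m0 (P 0), lam * m0 (P 1), lam * m0 (P 2), lam * m0 (P 3), lam * m0 (P 4), lam * m0 (P 5)}"
    by (simp only: six image_insert image_empty mo)
  have det: "lam * - \<beta> - - lam * \<alpha> * 1 = lam * (\<alpha> - \<beta>)" by (simp add: algebra_simps)
  show ?thesis
  proof (intro exI conjI)
    show "lam * - \<beta> - - lam * \<alpha> * 1 \<noteq> 0" unfolding det using lnz ab by simp
    show "lam * m0 (P 4) \<noteq> 0" using lnz m4 by simp
    show "\<forall>i<6. 1 * P i + - \<beta> \<noteq> 0" using nb by simp
    show "moebius lam (- lam * \<alpha>) 1 (- \<beta>) ` P ` {..<6} =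
      {lam * m0 (P 0), - (lam * m0 (P 0)), lam * m0 (P 2), - (lam * m0 (P 2)), lam * m0 (P 4), 1 / (lam * m0 (P 4))}"
      unfolding img m5 using m1 m3 by simp
  qed
qed

theorem mainTheorem6:
  shows "\<exists>f :: (nat \<Rightarrow> nat) \<Rightarrow> 'k::{alg_closed_field, field_char_0}.
           is_poly6 f \<and> (\<exists>e. f e \<noteq> 0) \<and>
           (\<forall>P :: nat \<Rightarrow> 'k. eval_poly6 f P \<noteq> 0 \<longrightarrow>
              (\<exists>a b c d x1 x2 v. a * d - b * c \<noteq> 0 \<and> v \<noteq> 0 \<and>
                 (\<forall>i<6. c * P i + d \<noteq> 0) \<and>
                 moebius a b c d ` (P ` {..<6}) = {x1, -x1, x2, -x2, v, 1 / v}))"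
proof (rule exI[of _ pF], intro conjI allI impI)
  show "is_poly6 pF" by (rule pF(1))
  show "\<exists>e. (pF :: _ \<Rightarrow> 'k) e \<noteq> 0" by (rule pF_nz)
  fix P :: "nat \<Rightarrow> 'k"
  assume "eval_poly6 pF P \<noteq> 0"
  thus "\<exists>a b c d x1 x2 v. a * d - b * c \<noteq> 0 \<and> v \<noteq> 0 \<and>
                 (\<forall>i<6. c * P i + d \<noteq> 0) \<and>
                 moebius a b c d ` (P ` {..<6}) = {x1, -x1, x2, -x2, v, 1 / v}"
    by (intro main_geo) (simp add: pF(2))
qed

end
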